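(* Let $\kappa>0$ and let $S$ be a $\kappa$-cylindrical surface whose directrix $(x,z)$ is given by the solution of $x'=\cos\theta$, $z'=\sin\theta$, $\theta'=\kappa z$ with $x(0)=0$, $\theta(0)=0$, $z(0)=z_0>0$ (so $z_0$ is the lowest height of $S$ above $\Pi=\{z=0\}$). Then the height $z$ satisfies $$z_0\le z(p)\le\sqrt{\frac4\kappa+z_0^2}\qquad\text{for all }p\in S,$$ and both bounds are attained.
   Context: A $\kappa$-cylindrical surface ($\kappa\ne0$ constant) is a cylindrical ruled surface in $\mathbb R^3$ locally satisfying $\operatorname{div}\big(Du/\sqrt{1+|Du|^2}\big)=\kappa u$; it has horizontal rulings and is parametrized as $(x(s),t,z(s))$ with arc-length directrix $(x,z)$ and $\theta$ the angle between $\partial/\partial x$ and the directrix, satisfying the system above. *)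

theory Defs
  imports Complex_Main
begin

definition cyl_surface :: "(real \<Rightarrow> real) \<Rightarrow> (real \<Rightarrow> real) \<Rightarrow> (real \<times> real \<times> real) set" where
  "cyl_surface x z = {(x s, t, z s) | s t. True}"

definition height :: "real \<times> real \<times> real \<Rightarrow> real" where
  "height p = snd (snd p)"

end

theory Submission
  imports Defs
begin

theorem mainTheorem5:
  fixes \<kappa> z\<^sub>0 :: real and x z \<theta> :: "real \<Rightarrow> real"
  assumes "\<kappa> > 0" and "z\<^sub>0 > 0"
    and "\<And>s. (x has_real_derivative cos (\<theta> s)) (at s)"
    and "\<And>s. (z has_real_derivative sin (\<theta> s)) (at s)"
    and "\<And>s. (\<theta> has_real_derivative \<kappa> * z s) (at s)"
    and "x 0 = 0" and "\<theta> 0 = 0" and "z 0 = z\<^sub>0"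
  shows "(\<forall>p \<in> cyl_surface x z. z\<^sub>0 \<le> height p \<and> height p \<le> sqrt (4 / \<kappa> + z\<^sub>0 ^ 2))
    \<and> (\<exists>p \<in> cyl_surface x z. height p = z\<^sub>0)
    \<and> (\<exists>p \<in> cyl_surface x z. height p = sqrt (4 / \<kappa> + z\<^sub>0 ^ 2))"
proof -
  note k = assms(1) and z0 = assms(2) and dz = assms(4) and dth = assms(5)
  define E where "E s = cos (\<theta> s) + \<kappa> / 2 * (z s)^2" for s
  have dE: "DERIV E s :> 0" for s
  proof -
    have "DERIV E s :> (- sin (\<theta> s) * (\<kappa> * z s) + \<kappa> / 2 * (2 * z s * sin (\<theta> s)))"
      unfolding E_def
      by (rule derivative_eq_intros dth dz refl | simp)+
    moreover have "- sin (\<theta> s) * (\<kappa> * z s) + \<kappa> / 2 * (2 * z s * sin (\<theta> s)) = 0"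
      by (simp add: algebra_simps)
    ultimately show ?thesis by simp
  qed
  have Econst: "E s = 1 + \<kappa> / 2 * z\<^sub>0^2" for s
    using DERIV_isconst_all[of E s 0] dE assms(7,8) by (simp add: E_def)
  have zsq: "(z s)^2 = z\<^sub>0^2 + 2 * (1 - cos (\<theta> s)) / \<kappa>" for s
    using Econst[of s] k unfolding E_def by (simp add: field_simps)
  have zsq_ge: "(z s)^2 \<ge> z\<^sub>0^2" for s
    using zsq[of s] k cos_le_one[of "\<theta> s"] by (simp add: divide_nonneg_pos)
  have zsq_le: "(z s)^2 \<le> z\<^sub>0^2 + 4 / \<kappa>" for s
  proof -
    have c1: "2 * (1 - cos (\<theta> s)) \<le> 4" using cos_ge_minus_one[of "\<theta> s"] by (smt (verit))
    have "2 * (1 - cos (\<theta> s)) / \<kappa> \<le> 4 / \<kappa>"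
      using divide_right_mono[OF c1, of \<kappa>] k by (simp add: algebra_simps)
    thus ?thesis using zsq[of s] by simp
  qed
  have zne: "z s \<noteq> 0" for s
    using zsq_ge[of s] z0 by (metis power2_less_0 not_less power_zero_numeral zero_less_power2 less_le_trans dual_order.strict_iff_not)
  have zcont: "continuous_on A z" for A
    using dz by (meson DERIV_continuous continuous_at_imp_continuous_on)
  have thcont: "continuous_on A \<theta>" for A
    using dth by (meson DERIV_continuous continuous_at_imp_continuous_on)
  have zpos: "z s > 0" for s
  proof (rule ccontr)
    assume "\<not> z s > 0"
    hence zs: "z s \<le> 0" by simp
    show False
    proof (cases "s \<ge> 0")
      case True
      from IVT2'[of z s 0 0, OF zs _ True zcont] z0 assms(8) obtain t where "z t = 0" by auto
      thus False using zne by blast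
    next
      case False
      from IVT'[of z s 0 0, OF zs _ _ zcont] z0 assms(8) False obtain t where "z t = 0" by auto
      thus False using zne by blast
    qed
  qed
  have zge: "z s \<ge> z\<^sub>0" for s
    using zsq_ge[of s] zpos[of s] z0 by (meson power2_le_imp_le less_imp_le)
  have zle: "z s \<le> sqrt (4 / \<kappa> + z\<^sub>0 ^ 2)" for s
    using zsq_le[of s] zpos[of s] by (metis add.commute real_le_rsqrt)
  define s1 where "s1 = pi / (\<kappa> * z\<^sub>0)"
  have s1pos: "s1 > 0" unfolding s1_def using k z0 by simp
  obtain c where c: "0 < c" "c < s1" "\<theta> s1 - \<theta> 0 = (s1 - 0) * (\<kappa> * z c)"
    using MVT2[of 0 s1 \<theta> "\<lambda>s. \<kappa> * z s"] s1pos dth by blast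
  have "s1 * (\<kappa> * z\<^sub>0) \<le> s1 * (\<kappa> * z c)"
    using s1pos k zge[of c] by (intro mult_left_mono) auto
  moreover have "s1 * (\<kappa> * z\<^sub>0) = pi" unfolding s1_def using k z0 by simp
  ultimately have "\<theta> s1 \<ge> pi" using c assms(7) by simp
  then obtain t where t: "\<theta> t = pi"
    using IVT'[of \<theta> 0 pi s1, OF _ _ _ thcont] assms(7) s1pos by auto
  have "(z t)^2 = z\<^sub>0^2 + 4 / \<kappa>" using zsq[of t] t by simp
  hence ztop: "z t = sqrt (4 / \<kappa> + z\<^sub>0 ^ 2)"
    using zpos[of t] by (metis add.commute less_imp_le real_sqrt_unique)
  have mem: "(x s, y, z s) \<in> cyl_surface x z" for s y unfolding cyl_surface_def by blast
  show ?thesis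
  proof (intro conjI ballI)
    fix p assume "p \<in> cyl_surface x z"
    then obtain s y where "p = (x s, y, z s)" unfolding cyl_surface_def by blast
    thus "z\<^sub>0 \<le> height p" "height p \<le> sqrt (4 / \<kappa> + z\<^sub>0 ^ 2)"
      using zge zle by (auto simp: height_def)
  next
    show "\<exists>p \<in> cyl_surface x z. height p = z\<^sub>0"
      using mem[of 0 0] assms(8) by (force simp: height_def)
  next
    show "\<exists>p \<in> cyl_surface x z. height p = sqrt (4 / \<kappa> + z\<^sub>0 ^ 2)"
      using mem[of t 0] ztop by (force simp: height_def)
  qed
qed

end
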